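(* Let $E$ be a Banach lattice, $u_0\in E^+$, $\delta>0$, and let $D\subseteq (E^* )^+$ be such that $\langle u_0,x^*\rangle\ge\delta$ for all $x^*\in D$. If $D$ is almost order bounded with respect to $\rho_{u_0}$, then there exists $M\in\mathbb N$ such that every set of mutually disjoint elements of $D$ contains at most $M$ elements.
   Context: For $u_0\in E$, $\rho_{u_0}$ is the Riesz seminorm on $E^*$ given by $\rho_{u_0}(x^* )=\langle |u_0|,|x^*|\rangle$, and $B_{\rho_{u_0}}=\{x^*\in E^*:\rho_{u_0}(x^* )\le 1\}$. A set $D\subseteq E^*$ is almost order bounded with respect to $\rho_{u_0}$ if for every $\varepsilon>0$ there exists $y^*\in (E^* )^+$ with $D\subseteq[-y^*,y^*]+\varepsilon B_{\rho_{u_0}}$. *)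

theory Defs
  imports "HOL-Analysis.Analysis"
begin

definition labs :: "'a::{uminus,sup} \<Rightarrow> 'a" where
  "labs x = sup x (- x)"

class banach_lattice = banach + ordered_real_vector + lattice +
  assumes lattice_norm: "sup x (- x) \<le> sup y (- y) \<Longrightarrow> norm x \<le> norm y"

text \<open>The dual E^* is represented by bounded linear functionals E \<Rightarrow> real.
Its order is the pointwise order on the positive cone.\<close>

definition dual_pos :: "('a::banach_lattice \<Rightarrow> real) \<Rightarrow> bool" where
  "dual_pos f \<longleftrightarrow> bounded_linear f \<and> (\<forall>x. 0 \<le> x \<longrightarrow> 0 \<le> f x)"

definition dual_le :: "('a::banach_lattice \<Rightarrow> real) \<Rightarrow> ('a \<Rightarrow> real) \<Rightarrow> bool" where
  "dual_le f g \<longleftrightarrow> (\<forall>x. 0 \<le> x \<longrightarrow> f x \<le> g x)"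

text \<open>Modulus of a functional (Riesz--Kantorovich): for x \<ge> 0,
  |x^*|(x) = sup { |x^*(y)| : |y| \<le> x }.\<close>

definition dual_abs :: "('a::banach_lattice \<Rightarrow> real) \<Rightarrow> 'a \<Rightarrow> real" where
  "dual_abs f x = Sup {\<bar>f y\<bar> | y. labs y \<le> x}"

definition rho :: "'a::banach_lattice \<Rightarrow> ('a \<Rightarrow> real) \<Rightarrow> real" where
  "rho u0 f = dual_abs f (labs u0)"

text \<open>Infimum of two functionals (Riesz--Kantorovich): for u \<ge> 0,
  (x^* \<and> y^*)(u) = inf { x^*(v) + y^*(u - v) : 0 \<le> v \<le> u }.\<close>

definition dual_inf :: "('a::banach_lattice \<Rightarrow> real) \<Rightarrow> ('a \<Rightarrow> real) \<Rightarrow> 'a \<Rightarrow> real" where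
  "dual_inf f g u = Inf {f v + g (u - v) | v. 0 \<le> v \<and> v \<le> u}"

text \<open>Disjointness in E^*: |x^*| \<and> |y^*| = 0, i.e. it vanishes on the positive cone.\<close>

definition dual_disjoint :: "('a::banach_lattice \<Rightarrow> real) \<Rightarrow> ('a \<Rightarrow> real) \<Rightarrow> bool" where
  "dual_disjoint f g \<longleftrightarrow>
     (\<forall>u. 0 \<le> u \<longrightarrow> dual_inf (\<lambda>x. dual_abs f x) (\<lambda>x. dual_abs g x) u = 0)"

text \<open>D is almost order bounded w.r.t. rho_{u0}: for every \<epsilon> > 0 there is
y^* \<ge> 0 in E^* with D \<subseteq> [-y^*, y^*] + \<epsilon> B_rho.\<close>

definition almost_order_bounded ::
  "'a::banach_lattice \<Rightarrow> ('a \<Rightarrow> real) set \<Rightarrow> bool" where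
  "almost_order_bounded u0 D \<longleftrightarrow>
     (\<forall>\<epsilon>>0. \<exists>y. dual_pos y \<and>
        (\<forall>f\<in>D. \<exists>z w. bounded_linear z \<and> bounded_linear w \<and> f = (\<lambda>x. z x + w x) \<and>
            dual_le (\<lambda>x. - y x) z \<and> dual_le z y \<and> rho u0 w \<le> \<epsilon>))"

end

theory Submission
  imports Defs
begin

lemma bl_diff: "bounded_linear f \<Longrightarrow> f (a - b) = f a - f b"
  by (simp add: linear_diff bounded_linear.linear)

lemma bl_add: "bounded_linear f \<Longrightarrow> f (a + b) = f a + f b"
  by (simp add: linear_add bounded_linear.linear)

lemma bl_sum: "bounded_linear f \<Longrightarrow> f (sum g A) = (\<Sum>x\<in>A. f (g x))"
  by (simp add: linear_sum bounded_linear.linear)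

lemma labs_pos: "0 \<le> (x::'a::banach_lattice) \<Longrightarrow> labs x = x"
  unfolding labs_def
  by (metis neg_le_0_iff_le order.trans sup.absorb1)

lemma dual_pos_labs:
  assumes "dual_pos f" shows "\<bar>f y\<bar> \<le> f (labs y)"
proof -
  have bl: "bounded_linear f" using assms dual_pos_def by blast
  have "0 \<le> f (labs y - y)" using assms unfolding dual_pos_def labs_def
    by (simp add: le_iff_diff_le_0[symmetric])
  moreover have "0 \<le> f (labs y - (- y))" using assms unfolding dual_pos_def labs_def
    by (metis diff_ge_0_iff_ge sup_ge2)
  ultimately have "f y \<le> f (labs y)" "- f y \<le> f (labs y)"
    using bl_diff[OF bl, of "labs y" y] bl_diff[OF bl, of "labs y" "- y"]
      linear_neg[OF bounded_linear.linear[OF bl], of y] by auto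
  then show ?thesis by linarith
qed

lemma dual_abs_pos:
  assumes "dual_pos f" "0 \<le> x" shows "dual_abs f x = f x"
  unfolding dual_abs_def
proof (rule cSup_eq_non_empty)
  have "\<bar>f x\<bar> \<in> {\<bar>f y\<bar> |y. labs y \<le> x}" using labs_pos[OF assms(2)] by force
  then show "{\<bar>f y\<bar> |y. labs y \<le> x} \<noteq> {}" by blast
  fix z assume "z \<in> {\<bar>f y\<bar> |y. labs y \<le> x}"
  then obtain y where "z = \<bar>f y\<bar>" "labs y \<le> x" by auto
  moreover have "f (labs y) \<le> f x"
    using assms(1) \<open>labs y \<le> x\<close> unfolding dual_pos_def
    by (metis bl_diff diff_ge_0_iff_ge)
  ultimately show "z \<le> f x" using dual_pos_labs[OF assms(1), of y] by linarith
next
  fix b assume "\<And>z. z \<in> {\<bar>f y\<bar> |y. labs y \<le> x} \<Longrightarrow> z \<le> b"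
  moreover have "\<bar>f x\<bar> \<in> {\<bar>f y\<bar> |y. labs y \<le> x}" using labs_pos[OF assms(2)] by auto
  moreover have "f x \<ge> 0" using assms dual_pos_def by blast
  ultimately show "f x \<le> b" by fastforce
qed

lemma disjoint_split:
  assumes "dual_disjoint f g" "dual_pos f" "dual_pos g" "0 \<le> u" "\<eta> > 0"
  shows "\<exists>v. 0 \<le> v \<and> v \<le> u \<and> f v + g (u - v) < \<eta>"
proof -
  let ?A = "{dual_abs f v + dual_abs g (u - v) | v. 0 \<le> v \<and> v \<le> u}"
  have "Inf ?A = 0" using assms(1,4) unfolding dual_disjoint_def dual_inf_def by auto
  moreover have "?A \<noteq> {}" using assms(4) by auto
  ultimately have "\<exists>a\<in>?A. a < \<eta>" using cInf_lessD[of ?A \<eta>] assms(5) by simp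
  then obtain a where "a \<in> ?A" "a < \<eta>" by blast
  then obtain v where v: "0 \<le> v" "v \<le> u" "a = dual_abs f v + dual_abs g (u - v)" by auto
  have "u - v \<ge> 0" using v by (simp add: diff_ge_0_iff_ge)
  then have "a = f v + g (u - v)" using v dual_abs_pos[OF assms(2) v(1)] dual_abs_pos[OF assms(3)] by simp
  then show ?thesis using v \<open>a < \<eta>\<close> by blast
qed

lemma split_lemma:
  assumes "finite S"
  shows "(\<forall>f\<in>S. dual_pos f) \<Longrightarrow> pairwise dual_disjoint S \<Longrightarrow> 0 \<le> (u::'a::banach_lattice) \<Longrightarrow> \<eta> > 0 \<Longrightarrow>
    \<exists>p. (\<forall>f\<in>S. 0 \<le> p f) \<and> sum p S \<le> u \<and> (\<forall>f\<in>S. f u - \<eta> \<le> f (p f))"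
  using assms
proof (induction S arbitrary: \<eta> rule: finite_induct)
  case empty
  then show ?case by (intro exI[of _ "\<lambda>_. 0"]) simp
next
  case (insert g S)
  have posS: "\<forall>f\<in>S. dual_pos f" and posg: "dual_pos g" using insert.prems(1) by auto
  have pwS: "pairwise dual_disjoint S" using pairwise_subset[OF insert.prems(2) subset_insertI] .
  have blg: "bounded_linear g" using posg dual_pos_def by blast
  define k where "k = card S"
  define e where "e = \<eta> / (2 * (real k + 1))"
  have kpos: "real k + 1 > 0" by simp
  have e0: "e > 0" using insert.prems(4) kpos unfolding e_def by simp
  have e1: "e * (real k + 1) = \<eta> / 2" unfolding e_def using kpos by (simp add: field_simps)
  then have "real k * e + e = \<eta> / 2" by (simp add: algebra_simps)
  then have e2: "real k * e \<le> \<eta> / 2" using e0 by linarith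
  have e3: "e \<le> \<eta> / 2" unfolding e_def using insert.prems(4) kpos
    by (simp add: divide_le_eq)
  have eta2: "\<eta> / 2 > 0" using insert.prems(4) by simp
  obtain p where p: "\<forall>f\<in>S. 0 \<le> p f" "sum p S \<le> u" "\<forall>f\<in>S. f u - \<eta>/2 \<le> f (p f)"
    using insert.IH[OF posS pwS insert.prems(3) eta2] by blast
  have "\<forall>f\<in>S. \<exists>v. 0 \<le> v \<and> v \<le> p f \<and> f v + g (p f - v) < e"
  proof
    fix f assume f: "f \<in> S"
    then have "f \<noteq> g" using insert.hyps by auto
    then have "dual_disjoint f g" using insert.prems(2) f unfolding pairwise_def by auto
    then show "\<exists>v. 0 \<le> v \<and> v \<le> p f \<and> f v + g (p f - v) < e"
      by (rule disjoint_split) (use posS f posg p(1) e0 in auto)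
  qed
  from bchoice[OF this] obtain q where q: "\<forall>f\<in>S. 0 \<le> q f \<and> q f \<le> p f \<and> f (q f) + g (p f - q f) < e"
    by blast
  define r where "r = u - sum p S"
  have r0: "0 \<le> r" using p(2) by (simp add: r_def diff_ge_0_iff_ge)
  define p' where "p' = (\<lambda>f. if f = g then r + sum q S else p f - q f)"
  have p'S: "sum p' S = sum (\<lambda>f. p f - q f) S"
    using insert.hyps by (auto simp: p'_def intro!: sum.cong)
  have A: "\<forall>f\<in>insert g S. 0 \<le> p' f"
    using q r0 by (auto simp: p'_def diff_ge_0_iff_ge intro!: sum_nonneg add_nonneg_nonneg)
  have "sum p' (insert g S) = u"
    using insert.hyps p'S by (simp add: p'_def sum_subtractf r_def)
  then have B: "sum p' (insert g S) \<le> u" by simp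
  have C1: "g u - \<eta> \<le> g (p' g)"
  proof -
    have "u = r + sum p S" by (simp add: r_def)
    then have "g u = g r + (\<Sum>f\<in>S. g (p f))" using bl_sum[OF blg] bl_add[OF blg] by metis
    also have "\<dots> = g r + ((\<Sum>f\<in>S. g (q f)) + (\<Sum>f\<in>S. g (p f - q f)))"
      by (simp add: bl_diff[OF blg] sum_subtractf)
    also have "(\<Sum>f\<in>S. g (p f - q f)) \<le> (\<Sum>f\<in>S. e)"
    proof (rule sum_mono)
      fix f assume f: "f \<in> S"
      have "0 \<le> f (q f)" using posS f q unfolding dual_pos_def by blast
      then show "g (p f - q f) \<le> e" using q f by fastforce
    qed
    also have "(\<Sum>f\<in>S. e) = real k * e" using k_def by simp
    also have "\<dots> \<le> \<eta>" using e2 insert.prems(4) by linarith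
    finally have "g u \<le> g r + (\<Sum>f\<in>S. g (q f)) + \<eta>" by simp
    moreover have "g (p' g) = g r + (\<Sum>f\<in>S. g (q f))" by (simp add: p'_def bl_sum[OF blg] bl_add[OF blg])
    ultimately show ?thesis by simp
  qed
  have C2: "\<forall>f\<in>S. f u - \<eta> \<le> f (p' f)"
  proof
    fix f assume f: "f \<in> S"
    then have fg: "f \<noteq> g" using insert.hyps by auto
    have blf: "bounded_linear f" using posS f dual_pos_def by blast
    have "0 \<le> g (p f - q f)" using posg q f unfolding dual_pos_def
      by (simp add: diff_ge_0_iff_ge)
    then have "f (q f) \<le> e" using q f by fastforce
    moreover have "f u - \<eta>/2 \<le> f (p f)" using p(3) f by blast
    moreover have "f (p' f) = f (p f) - f (q f)" using fg by (simp add: p'_def bl_diff[OF blf])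
    ultimately show "f u - \<eta> \<le> f (p' f)" using e3 by linarith
  qed
  show ?case using A B C1 C2 by blast
qed

lemma rho_bound:
  fixes u0 v :: "'a::banach_lattice"
  assumes bl: "bounded_linear w" and "0 \<le> u0" "0 \<le> v" "v \<le> u0"
  shows "w v \<le> rho u0 w"
proof -
  obtain K where K: "K > 0" "\<And>x. norm (w x) \<le> norm x * K"
    using bounded_linear.pos_bounded[OF bl] by blast
  have lu: "labs u0 = u0" using labs_pos assms(2) by blast
  have lv: "labs v = v" using labs_pos assms(3) by blast
  let ?A = "{\<bar>w y\<bar> |y. labs y \<le> labs u0}"
  have "bdd_above ?A"
  proof (rule bdd_aboveI)
    fix a assume "a \<in> ?A"
    then obtain y where y: "a = \<bar>w y\<bar>" "labs y \<le> labs u0" by blast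
    have "norm y \<le> norm u0" using lattice_norm[of y u0] y(2) unfolding labs_def by simp
    then have "norm y * K \<le> norm u0 * K" using K(1) by (simp add: mult_right_mono)
    moreover have "\<bar>w y\<bar> \<le> norm y * K" using K(2)[of y] by simp
    ultimately show "a \<le> norm u0 * K" using y(1) by linarith
  qed
  moreover have "\<bar>w v\<bar> \<in> ?A" using lu lv assms(4) by force
  ultimately have "\<bar>w v\<bar> \<le> Sup ?A" by (rule cSup_upper[rotated])
  then show ?thesis unfolding rho_def dual_abs_def by linarith
qed

theorem corollary3p5:
  fixes u0 :: "'a::banach_lattice" and \<delta> :: real and D :: "('a \<Rightarrow> real) set"
  assumes "0 \<le> u0"
    and "\<delta> > 0"
    and "\<forall>f\<in>D. dual_pos f"
    and "\<forall>f\<in>D. f u0 \<ge> \<delta>"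
    and "almost_order_bounded u0 D"
  shows "\<exists>M::nat. \<forall>S. S \<subseteq> D \<and> pairwise dual_disjoint S \<longrightarrow> finite S \<and> card S \<le> M"
proof -
  have d4: "\<delta>/4 > 0" using assms(2) by simp
  obtain y where y: "dual_pos y" and yD: "\<forall>f\<in>D. \<exists>z w. bounded_linear z \<and> bounded_linear w \<and> f = (\<lambda>x. z x + w x) \<and>
            dual_le (\<lambda>x. - y x) z \<and> dual_le z y \<and> rho u0 w \<le> \<delta>/4"
    using assms(5)[unfolded almost_order_bounded_def, rule_format, OF d4] by (elim exE conjE) (rule that)
  have bly: "bounded_linear y" using y dual_pos_def by blast
  define M where "M = nat \<lceil>2 * y u0 / \<delta>\<rceil>"
  have fin: "card S \<le> M" if S: "finite S" "S \<subseteq> D" "pairwise dual_disjoint S" for S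
  proof -
    have posS: "\<forall>f\<in>S. dual_pos f" using S(2) assms(3) by blast
    obtain p where p: "\<forall>f\<in>S. 0 \<le> p f" "sum p S \<le> u0" "\<forall>f\<in>S. f u0 - \<delta>/4 \<le> f (p f)"
      using split_lemma[OF S(1) posS S(3) assms(1) d4] by blast
    have each: "\<delta>/2 \<le> y (p f)" if f: "f \<in> S" for f
    proof -
      have "sum p S = p f + sum p (S - {f})" using sum.remove[OF S(1) f] .
      moreover have "0 \<le> sum p (S - {f})" using p(1) by (intro sum_nonneg) auto
      ultimately have "p f \<le> sum p S" by simp
      then have pu: "p f \<le> u0" using p(2) by (rule order_trans)
      have p0: "0 \<le> p f" using p(1) f by blast
      have fD: "f \<in> D" using f S(2) by blast
      from bspec[OF yD fD] obtain z w where zw0: "bounded_linear z \<and> bounded_linear w \<and> f = (\<lambda>x. z x + w x) \<and>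
            dual_le (\<lambda>x. - y x) z \<and> dual_le z y \<and> rho u0 w \<le> \<delta>/4" by (elim exE)
      then have zw: "bounded_linear w" "f = (\<lambda>x. z x + w x)" "dual_le z y" "rho u0 w \<le> \<delta>/4"
        by simp_all
      have "z (p f) \<le> y (p f)" using zw(3) p0 unfolding dual_le_def by blast
      moreover have "w (p f) \<le> \<delta>/4" using rho_bound[OF zw(1) assms(1) p0 pu] zw(4) by linarith
      moreover have "f (p f) = z (p f) + w (p f)" using zw(2) by simp
      moreover have "f u0 - \<delta>/4 \<le> f (p f)" using p(3) f by blast
      moreover have "\<delta> \<le> f u0" using assms(4) f S(2) by blast
      ultimately show ?thesis by linarith
    qed
    have "real (card S) * (\<delta>/2) = (\<Sum>f\<in>S. \<delta>/2)" by simp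
    also have "\<dots> \<le> (\<Sum>f\<in>S. y (p f))" using each by (rule sum_mono)
    also have "\<dots> = y (sum p S)" by (rule bl_sum[OF bly, symmetric])
    also have "\<dots> \<le> y u0"
    proof -
      have "0 \<le> y (u0 - sum p S)" using y p(2) unfolding dual_pos_def
        by (simp add: diff_ge_0_iff_ge)
      then show ?thesis using bl_diff[OF bly] by simp
    qed
    finally have "real (card S) * (\<delta>/2) \<le> y u0" .
    then have "real (card S) \<le> 2 * y u0 / \<delta>" using assms(2) by (simp add: field_simps)
    also have "\<dots> \<le> real M" unfolding M_def by linarith
    finally show ?thesis by simp
  qed
  have "\<forall>S. S \<subseteq> D \<and> pairwise dual_disjoint S \<longrightarrow> finite S \<and> card S \<le> M"
  proof (intro allI impI)
    fix S assume S: "S \<subseteq> D \<and> pairwise dual_disjoint S"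
    have "finite S"
    proof (rule ccontr)
      assume "infinite S"
      then obtain T where T: "finite T" "card T = Suc M" "T \<subseteq> S"
        using infinite_arbitrarily_large by blast
      have pT: "pairwise dual_disjoint T" using S pairwise_subset[OF _ T(3)] by simp
      have TD: "T \<subseteq> D" using T(3) S by (meson order_trans)
      have "card T \<le> M" using fin[OF T(1) TD pT] .
      then show False using T(2) by simp
    qed
    then show "finite S \<and> card S \<le> M" using fin[of S] S by simp
  qed
  then show ?thesis by blast
qed

end
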